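(* Let $M\subset\mathcal P(\Omega_1)$, $N\subset\mathcal P(\Omega_2)$ be submanifolds, $\varphi:M\to N$ and $\psi:N\to M$ Markov maps with $\psi\circ\varphi=\mathrm{id}_M$, and $p\in M$, $q\in N$ with $q=\varphi(p)$, $p=\psi(q)$. Then the Fisher metrics satisfy $$g_{M,p}(X_p,\psi_{*,q}Y_q)=g_{N,q}(\varphi_{*,p}X_p,Y_q)\quad\forall X_p\in T_p(M),\ Y_q\in T_q(N),$$ i.e. $\psi_{*,q}=(\varphi_{*,p})^\dagger$ (adjoint with respect to $g_{M,p}$ and $g_{N,q}$). Equivalently, for the Fisher co-metrics, $g_{M,p}(\alpha_p,\varphi^*_p\beta_q)=g_{N,q}(\psi^*_q\alpha_p,\beta_q)$ for all $\alpha_p\in T^*_p(M)$, $\beta_q\in T_q^*(N)$. Moreover $(\psi_{*,q})^\dagger\circ\psi_{*,q}=\varphi_{*,p}\circ\psi_{*,q}$ is the orthogonal projector of $T_q(N)$ onto $\varphi_{*,p}(T_p(M))$.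
   Context: $\mathcal P(\Omega)$ is the manifold of strictly positive probability distributions on a finite set $\Omega$. A Markov map $\mathcal P(\Omega_1)\to\mathcal P(\Omega_2)$ is a map $p\mapsto\sum_xW(\cdot|x)p(x)$ for a channel $W$ with $\forall y\,\exists x\,W(y|x)>0$; a Markov map $M\to N$ between submanifolds is the restriction to $M$ of such a map. $\varphi_{*,p}$ is the differential at $p$, $\varphi^*_p$ its transpose. The Fisher metric on $\mathcal P(\Omega)$ is $g_p(X,Y)=\sum_\omega X^{(m)}(\omega)Y^{(m)}(\omega)/p(\omega)$ with $X^{(m)}$ the m-representation (identification of $T_p(\mathcal P(\Omega))$ with $\{B:\sum B=0\}$); $g_M,g_N$ are its restrictions, and the same symbols denote the dual inner products on cotangent spaces (Fisher co-metrics). *)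

theory Defs
  imports "HOL-Analysis.Analysis"
begin

definition prob_simplex :: "(real^'a::finite) set" where
  "prob_simplex = {p. (\<forall>x. 0 < p$x) \<and> (\<Sum>x\<in>UNIV. p$x) = 1}"

text \<open>A channel W(y|x), written W y x, with every output reachable.\<close>
definition is_channel :: "('b::finite \<Rightarrow> 'a::finite \<Rightarrow> real) \<Rightarrow> bool" where
  "is_channel W \<longleftrightarrow> (\<forall>x y. 0 \<le> W y x) \<and> (\<forall>x. (\<Sum>y\<in>UNIV. W y x) = 1) \<and> (\<forall>y. \<exists>x. 0 < W y x)"

text \<open>The (linear) map p |-> sum_x W(.|x) p(x); on P(Omega) it is the Markov map, and on
  tangent vectors (m-representation) it is its differential.\<close>
definition markov_map :: "('b::finite \<Rightarrow> 'a::finite \<Rightarrow> real) \<Rightarrow> real^'a \<Rightarrow> real^'b" where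
  "markov_map W p = (\<chi> y. \<Sum>x\<in>UNIV. W y x * p$x)"

text \<open>C-infinity real functions on an open set: differentiable, with all partial derivatives
  again C-infinity (greatest fixed point).\<close>
coinductive smooth_on :: "(real^'n::finite) set \<Rightarrow> (real^'n \<Rightarrow> real) \<Rightarrow> bool" for U where
  "(\<forall>x\<in>U. f differentiable (at x)) \<Longrightarrow>
   (\<forall>i. smooth_on U (\<lambda>x. frechet_derivative f (at x) (axis i 1))) \<Longrightarrow> smooth_on U f"

definition submanifold :: "(real^'n::finite) set \<Rightarrow> bool" where
  "submanifold S \<longleftrightarrow> (\<forall>p\<in>S. \<exists>U k (F :: nat \<Rightarrow> real^'n \<Rightarrow> real).
      open U \<and> p \<in> U \<and> (\<forall>i<k. smooth_on U (F i)) \<and>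
      (\<forall>x\<in>S \<inter> U. \<forall>c :: nat \<Rightarrow> real. \<exists>v. \<forall>i<k. frechet_derivative (F i) (at x) v = c i) \<and>
      S \<inter> U = {x\<in>U. \<forall>i<k. F i x = 0})"

definition tangent_space :: "(real^'n::finite) set \<Rightarrow> real^'n \<Rightarrow> (real^'n) set" where
  "tangent_space S p = {v. \<exists>(\<gamma> :: real \<Rightarrow> real^'n) e. 0 < e \<and> \<gamma> 0 = p \<and>
      (\<forall>t. \<bar>t\<bar> < e \<longrightarrow> \<gamma> t \<in> S) \<and> (\<gamma> has_vector_derivative v) (at 0)}"

definition fisher :: "real^'n::finite \<Rightarrow> real^'n \<Rightarrow> real^'n \<Rightarrow> real" where
  "fisher p X Y = (\<Sum>w\<in>UNIV. X$w * Y$w / p$w)"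

definition cotangent :: "(real^'n::finite) set \<Rightarrow> (real^'n \<Rightarrow> real) set" where
  "cotangent T = {\<alpha>. (\<forall>X\<in>T. \<forall>Y\<in>T. \<alpha> (X + Y) = \<alpha> X + \<alpha> Y) \<and>
      (\<forall>c. \<forall>X\<in>T. \<alpha> (c *\<^sub>R X) = c * \<alpha> X) \<and> (\<forall>X. X \<notin> T \<longrightarrow> \<alpha> X = 0)}"

definition pullback :: "(real^'n::finite \<Rightarrow> real^'m::finite) \<Rightarrow> (real^'n) set \<Rightarrow> (real^'m \<Rightarrow> real) \<Rightarrow> real^'n \<Rightarrow> real" where
  "pullback L T \<beta> = (\<lambda>X. if X \<in> T then \<beta> (L X) else 0)"

definition riesz :: "real^'n::finite \<Rightarrow> (real^'n) set \<Rightarrow> (real^'n \<Rightarrow> real) \<Rightarrow> real^'n" where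
  "riesz p T \<alpha> = (THE v. v \<in> T \<and> (\<forall>X\<in>T. fisher p v X = \<alpha> X))"

definition fisher_co :: "real^'n::finite \<Rightarrow> (real^'n) set \<Rightarrow> (real^'n \<Rightarrow> real) \<Rightarrow> (real^'n \<Rightarrow> real) \<Rightarrow> real" where
  "fisher_co p T \<alpha> \<beta> = fisher p (riesz p T \<alpha>) (riesz p T \<beta>)"

end

theory Submission
  imports Defs
begin


lemma mm_nth[simp]: "markov_map W p $ y = (\<Sum>x\<in>UNIV. W y x * p$x)"
  by (simp add: markov_map_def)

lemma fisher_adj:
  fixes W :: "'b::finite \<Rightarrow> 'a::finite \<Rightarrow> real" and V :: "'a \<Rightarrow> 'b \<Rightarrow> real"
  assumes pp: "\<forall>x. 0 < p$x" and qp: "\<forall>y. 0 < q$y"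
    and cW: "is_channel W" and cV: "is_channel V"
    and qW: "q = markov_map W p" and pV: "p = markov_map V q"
    and XX: "markov_map V (markov_map W X) = X"
  shows "fisher q (markov_map W X) Y = fisher p X (markov_map V Y)"
proof -
  define Z where "Z = markov_map W X"
  have VZ: "(\<Sum>y\<in>UNIV. V x y * Z$y) = X$x" for x
    using XX unfolding Z_def by (metis mm_nth)
  have Zy: "Z$y = (\<Sum>x\<in>UNIV. W y x * X$x)" for y unfolding Z_def by simp
  have qy: "q$y = (\<Sum>x\<in>UNIV. W y x * p$x)" for y using qW by simp
  have px: "p$x = (\<Sum>y\<in>UNIV. V x y * q$y)" for x using pV by (metis mm_nth)
  have sV: "(\<Sum>x\<in>UNIV. V x y) = 1" for y using cV unfolding is_channel_def by blast
  have sW: "(\<Sum>y\<in>UNIV. W y x) = 1" for x using cW unfolding is_channel_def by blast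
  have V0: "0 \<le> V x y" for x y using cV unfolding is_channel_def by blast
  have W0: "0 \<le> W y x" for x y using cW unfolding is_channel_def by blast
  define A where "A = (\<Sum>y\<in>UNIV. (Z$y)^2 / q$y)"
  define B where "B = (\<Sum>x\<in>UNIV. (X$x)^2 / p$x)"
  define D where "D = (\<Sum>x\<in>UNIV. \<Sum>y\<in>UNIV. V x y * q$y * (Z$y/q$y - X$x/p$x)^2)"
  define D' where "D' = (\<Sum>x\<in>UNIV. \<Sum>y\<in>UNIV. W y x * p$x * (X$x/p$x - Z$y/q$y)^2)"
  have term1: "V x y * q$y * (Z$y/q$y - X$x/p$x)^2
      = V x y * ((Z$y)^2/q$y) - 2 * (V x y * Z$y) * (X$x/p$x) + (V x y * q$y) * ((X$x)^2/(p$x)^2)" for x y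
  proof -
    have "p$x > 0" "q$y > 0" using pp qp by auto
    then show ?thesis by (simp add: power2_eq_square field_simps)
  qed
  have "D = (\<Sum>x\<in>UNIV. \<Sum>y\<in>UNIV. V x y * ((Z$y)^2/q$y))
      - 2 * (\<Sum>x\<in>UNIV. (\<Sum>y\<in>UNIV. V x y * Z$y) * (X$x/p$x))
      + (\<Sum>x\<in>UNIV. (\<Sum>y\<in>UNIV. V x y * q$y) * ((X$x)^2/(p$x)^2))"
    unfolding D_def term1 by (simp add: sum.distrib sum_subtractf sum_distrib_left sum_distrib_right mult.assoc sum_divide_distrib)
  also have "(\<Sum>x\<in>UNIV. \<Sum>y\<in>UNIV. V x y * ((Z$y)^2/q$y)) = A"
    unfolding A_def by (subst sum.swap) (simp add: sum_divide_distrib[symmetric] sum_distrib_right[symmetric] sV)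
  also have "(\<Sum>x\<in>UNIV. (\<Sum>y\<in>UNIV. V x y * Z$y) * (X$x/p$x)) = B"
    unfolding B_def VZ by (simp add: power2_eq_square)
  also have "(\<Sum>x\<in>UNIV. (\<Sum>y\<in>UNIV. V x y * q$y) * ((X$x)^2/(p$x)^2)) = B"
    unfolding B_def px[symmetric] using pp by (intro sum.cong) (auto simp: power2_eq_square)
  finally have DAB: "D = A - B" by simp
  have D'_swap: "D' = (\<Sum>y\<in>UNIV. \<Sum>x\<in>UNIV. W y x * p$x * (X$x/p$x - Z$y/q$y)^2)"
    unfolding D'_def by (rule sum.swap)
  have term2: "W y x * p$x * (X$x/p$x - Z$y/q$y)^2
      = W y x * ((X$x)^2/p$x) - 2 * (W y x * X$x) * (Z$y/q$y) + (W y x * p$x) * ((Z$y)^2/(q$y)^2)" for x y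
  proof -
    have "p$x > 0" "q$y > 0" using pp qp by auto
    then show ?thesis by (simp add: power2_eq_square field_simps)
  qed
  have "D' = (\<Sum>y\<in>UNIV. \<Sum>x\<in>UNIV. W y x * ((X$x)^2/p$x))
      - 2 * (\<Sum>y\<in>UNIV. (\<Sum>x\<in>UNIV. W y x * X$x) * (Z$y/q$y))
      + (\<Sum>y\<in>UNIV. (\<Sum>x\<in>UNIV. W y x * p$x) * ((Z$y)^2/(q$y)^2))"
    unfolding D'_swap term2
    by (simp add: sum.distrib sum_subtractf sum_distrib_left sum_distrib_right mult.assoc sum_divide_distrib)
  also have "(\<Sum>y\<in>UNIV. \<Sum>x\<in>UNIV. W y x * ((X$x)^2/p$x)) = B"
    unfolding B_def by (subst sum.swap) (simp add: sum_divide_distrib[symmetric] sum_distrib_right[symmetric] sW)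
  also have "(\<Sum>y\<in>UNIV. (\<Sum>x\<in>UNIV. W y x * X$x) * (Z$y/q$y)) = A"
    unfolding A_def Zy[symmetric] by (simp add: power2_eq_square)
  also have "(\<Sum>y\<in>UNIV. (\<Sum>x\<in>UNIV. W y x * p$x) * ((Z$y)^2/(q$y)^2)) = A"
    unfolding A_def qy[symmetric] using qp by (intro sum.cong) (auto simp: power2_eq_square)
  finally have DAB': "D' = B - A" by simp
  have D0: "D \<ge> 0" unfolding D_def using V0 qp by (intro sum_nonneg mult_nonneg_nonneg) (auto intro: less_imp_le)
  have D'0: "D' \<ge> 0" unfolding D'_def using W0 pp by (intro sum_nonneg mult_nonneg_nonneg) (auto intro: less_imp_le)
  have "D = 0" using D0 D'0 DAB DAB' by linarith
  have nn: "0 \<le> V x y * q$y * (Z$y/q$y - X$x/p$x)^2" for x y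
    using V0[of x y] qp by (simp add: less_imp_le)
  have nn2: "0 \<le> (\<Sum>y\<in>UNIV. V x y * q$y * (Z$y/q$y - X$x/p$x)^2)" for x
    by (rule sum_nonneg) (rule nn)
  have k1: "(\<Sum>y\<in>UNIV. V x y * q$y * (Z$y/q$y - X$x/p$x)^2) = 0" for x
    using \<open>D = 0\<close> unfolding D_def by (rule sum_nonneg_0[rotated 2]) (auto intro: nn2)
  have key: "V x y * q$y * (Z$y/q$y - X$x/p$x)^2 = 0" for x y
    using k1[of x] by (rule sum_nonneg_0[rotated 2]) (auto intro: nn)
  have key2: "V x y * (Z$y * Y$y / q$y) = V x y * (X$x * Y$y / p$x)" for x y
  proof (cases "V x y = 0")
    case False
    then have "Z$y/q$y = X$x/p$x" using key[of x y] qp by (auto simp: less_le)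
    then show ?thesis by (metis times_divide_eq_left mult.commute divide_divide_eq_left times_divide_eq_right)
  qed simp
  have "fisher q Z Y = (\<Sum>y\<in>UNIV. \<Sum>x\<in>UNIV. V x y * (Z$y * Y$y / q$y))"
    unfolding fisher_def by (simp add: sum_divide_distrib[symmetric] sum_distrib_right[symmetric] sV)
  also have "\<dots> = (\<Sum>y\<in>UNIV. \<Sum>x\<in>UNIV. V x y * (X$x * Y$y / p$x))" by (intro sum.cong refl) (rule key2)
  also have "\<dots> = fisher p X (markov_map V Y)"
    unfolding fisher_def by (subst sum.swap) (simp add: sum_distrib_left sum_divide_distrib mult_ac)
  finally show ?thesis unfolding Z_def .
qed



lemma linear_mm: "linear (markov_map W)"
  by (rule linearI) (simp_all add: vec_eq_iff sum.distrib algebra_simps sum_distrib_left)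

lemma bl_mm: "bounded_linear (markov_map W)"
  using linear_mm linear_conv_bounded_linear by blast

lemma vd_linear:
  assumes "(\<gamma> has_vector_derivative v) (at 0)" "bounded_linear L"
  shows "((\<lambda>t. L (\<gamma> t)) has_vector_derivative L v) (at 0)"
proof -
  have "((L \<circ> \<gamma>) has_derivative (L \<circ> (\<lambda>t. t *\<^sub>R v))) (at 0)"
    using bounded_linear.has_derivative[OF assms(2) assms(1)[unfolded has_vector_derivative_def]]
    by (simp add: comp_def)
  moreover have "L \<circ> (\<lambda>t. t *\<^sub>R v) = (\<lambda>t. t *\<^sub>R L v)"
    using assms(2) by (auto simp: bounded_linear.linear linear_scale)
  ultimately show ?thesis unfolding has_vector_derivative_def comp_def by simp
qed

lemma tangent_map:
  assumes "X \<in> tangent_space M p" "\<forall>x\<in>M. markov_map W x \<in> N"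
  shows "markov_map W X \<in> tangent_space N (markov_map W p)"
proof -
  obtain \<gamma> e where g: "0 < e" "\<gamma> 0 = p" "\<forall>t. \<bar>t\<bar> < e \<longrightarrow> \<gamma> t \<in> M"
    "(\<gamma> has_vector_derivative X) (at 0)"
    using assms(1) unfolding tangent_space_def by blast
  show ?thesis unfolding tangent_space_def
    apply (rule CollectI, rule exI[of _ "\<lambda>t. markov_map W (\<gamma> t)"], rule exI[of _ e])
    using g assms(2) vd_linear[OF g(4) bl_mm] by auto
qed

lemma tangent_id:
  assumes "X \<in> tangent_space M p" "\<forall>x\<in>M. markov_map V (markov_map W x) = x"
  shows "markov_map V (markov_map W X) = X"
proof -
  obtain \<gamma> e where g: "0 < e" "\<gamma> 0 = p" "\<forall>t. \<bar>t\<bar> < e \<longrightarrow> \<gamma> t \<in> M"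
    "(\<gamma> has_vector_derivative X) (at 0)"
    using assms(1) unfolding tangent_space_def by blast
  have "((\<lambda>t. markov_map V (markov_map W (\<gamma> t))) has_vector_derivative markov_map V (markov_map W X)) (at 0)"
    using vd_linear[OF vd_linear[OF g(4) bl_mm] bl_mm] .
  moreover have "((\<lambda>t. markov_map V (markov_map W (\<gamma> t))) has_vector_derivative X) (at 0)"
    by (rule has_vector_derivative_transform_within_open[OF g(4), of "ball 0 e"])
       (use g assms(2) in auto)
  ultimately show ?thesis using vector_derivative_unique_at by blast
qed



lemma tangent_sub_kernel:
  fixes F :: "real^'n::finite \<Rightarrow> real"
  assumes "open U" "p \<in> U" "\<forall>x\<in>S\<inter>U. F x = 0" "F differentiable (at p)" "v \<in> tangent_space S p"
  shows "frechet_derivative F (at p) v = 0"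
proof -
  obtain \<gamma> e where g: "0 < e" "\<gamma> 0 = p" "\<forall>t. \<bar>t\<bar> < e \<longrightarrow> \<gamma> t \<in> S"
    "(\<gamma> has_vector_derivative v) (at 0)"
    using assms(5) unfolding tangent_space_def by blast
  have "continuous (at 0) \<gamma>" using has_vector_derivative_continuous[OF g(4)] .
  then have "(\<gamma> \<longlongrightarrow> p) (at 0)" using g(2) by (simp add: continuous_at)
  then have ev1: "\<forall>\<^sub>F t in at 0. \<gamma> t \<in> U" using topological_tendstoD assms(1,2) by blast
  have ev2: "\<forall>\<^sub>F t in at (0::real). \<bar>t\<bar> < e" unfolding eventually_at using g(1)
    by (intro exI[of _ e]) auto
  have ev: "\<forall>\<^sub>F t in at 0. 0 = F (\<gamma> t)" using ev1 ev2
    by eventually_elim (use g assms(3) in auto)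
  have Fp: "F p = 0" using g assms by auto
  have d1: "((F \<circ> \<gamma>) has_derivative (frechet_derivative F (at p) \<circ> (\<lambda>t. t *\<^sub>R v))) (at 0)"
    apply (rule diff_chain_at)
    using g(4) apply (simp add: has_vector_derivative_def)
    using assms(4) g(2) frechet_derivative_works by auto
  have d2: "((F \<circ> \<gamma>) has_derivative (\<lambda>t. 0)) (at 0)"
    unfolding comp_def
    by (rule has_derivative_transform_eventually[OF has_derivative_const ev]) (use g Fp in auto)
  have "frechet_derivative F (at p) \<circ> (\<lambda>t. t *\<^sub>R v) = (\<lambda>t. 0)"
    using has_derivative_unique[OF d1 d2] .
  then show ?thesis by (metis comp_apply scaleR_one)
qed



lemma smooth_diff: "smooth_on U f \<Longrightarrow> x \<in> U \<Longrightarrow> f differentiable (at x)"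
  by (erule smooth_on.cases) auto

lemma smooth_part: "smooth_on U f \<Longrightarrow> smooth_on U (\<lambda>x. frechet_derivative f (at x) (axis j 1))"
  by (erule smooth_on.cases) auto

lemma smooth_cont: "smooth_on U f \<Longrightarrow> continuous_on U f"
  by (metis continuous_at_imp_continuous_on differentiable_imp_continuous_within smooth_diff)

lemma kernel_sub_tangent:
  fixes S :: "(real^'n::finite) set" and F :: "nat \<Rightarrow> real^'n \<Rightarrow> real"
  assumes U: "open U" "p \<in> U" and sm: "\<forall>i<k. smooth_on U (F i)"
   and surj: "\<forall>c::nat\<Rightarrow>real. \<exists>v. \<forall>i<k. frechet_derivative (F i) (at p) v = c i"
   and SU: "S \<inter> U = {x\<in>U. \<forall>i<k. F i x = 0}" and pS: "p \<in> S"
   and v: "\<forall>i<k. frechet_derivative (F i) (at p) v = 0"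
  shows "v \<in> tangent_space S p"
proof -
  define DF where "DF i x = frechet_derivative (F i) (at x)" for i x
  have hd: "(F i has_derivative DF i x) (at x)" if "i<k" "x\<in>U" for i x
    unfolding DF_def using smooth_diff sm that frechet_derivative_works by blast
  have lin: "linear (DF i x)" if "i<k" "x\<in>U" for i x
    using has_derivative_linear[OF hd[OF that]] .
  have contpart: "continuous_on U (\<lambda>x. DF i x (axis j 1))" if "i<k" for i j
    unfolding DF_def using smooth_cont[OF smooth_part] sm that by blast
  have ex: "\<forall>i. \<exists>u. \<forall>j<k. DF j p u = (if j = i then 1 else 0)"
  proof
    fix i
    show "\<exists>u. \<forall>j<k. DF j p u = (if j = i then 1 else 0)"
      using spec[OF surj, of "\<lambda>j. if j = i then 1 else 0"] unfolding DF_def by simp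
  qed
  obtain w where w0: "\<forall>i. \<forall>j<k. DF j p (w i) = (if j = i then 1 else 0)"
    using choice[OF ex] by (elim exE)
  have w: "\<And>i j. j<k \<Longrightarrow> DF j p (w i) = (if j = i then 1 else 0)" using w0 by simp
  define \<Phi> where "\<Phi> x = (x - p) + (\<Sum>i<k. (F i x - DF i p (x - p)) *\<^sub>R w i)" for x
  define L where "L x y = y + (\<Sum>i<k. (DF i x y - DF i p y) *\<^sub>R w i)" for x y
  have Llin: "linear (L x)" if "x \<in> U" for x
  proof (rule linearI)
    fix a b
    show "L x (a + b) = L x a + L x b"
      unfolding L_def using lin that U(2)
      by (simp add: linear_add scaleR_add_left sum.distrib[symmetric] algebra_simps)
  next
    fix c :: real and a
    show "L x (c *\<^sub>R a) = c *\<^sub>R L x a"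
      unfolding L_def using lin that U(2)
      by (simp add: linear_scale scaleR_sum_right algebra_simps)
  qed
  define f' where "f' x = Blinfun (L x)" for x
  have f'app: "blinfun_apply (f' x) = L x" if "x \<in> U" for x
  proof -
    have "bounded_linear (L x)" using Llin[OF that] by (simp add: linear_conv_bounded_linear)
    then show ?thesis unfolding f'_def by (rule bounded_linear_Blinfun_apply)
  qed
  have der\<Phi>: "(\<Phi> has_derivative blinfun_apply (f' x)) (at x)" if x: "x \<in> U" for x
  proof -
    have d1: "((\<lambda>y. y - p) has_derivative (\<lambda>y. y)) (at x)"
      using has_derivative_diff[OF has_derivative_ident has_derivative_const] by simp
    have d2: "((\<lambda>y. (F i y - DF i p (y - p)) *\<^sub>R w i) has_derivative
        (\<lambda>h. (DF i x h - DF i p h) *\<^sub>R w i)) (at x)" if i: "i \<in> {..<k}" for i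
    proof -
      have bl: "bounded_linear (DF i p)" using lin[OF _ U(2)] i by (simp add: linear_conv_bounded_linear)
      show ?thesis
        by (rule has_derivative_scaleR_left[OF has_derivative_diff[OF hd[OF _ x] bounded_linear.has_derivative[OF bl d1]]])
          (use i in simp)
    qed
    have "(\<Phi> has_derivative (\<lambda>y. y + (\<Sum>i<k. (DF i x y - DF i p y) *\<^sub>R w i))) (at x)"
      unfolding \<Phi>_def by (rule has_derivative_add[OF d1 has_derivative_sum]) (rule d2)
    then show ?thesis using f'app[OF x] unfolding L_def by simp
  qed
  have contf': "continuous_on U f'"
  proof (rule continuous_on_blinfun_componentwise)
    fix b :: "real^'n" assume "b \<in> Basis"
    then obtain j where b: "b = axis j 1" by (auto simp: Basis_vec_def)
    have "continuous_on U (\<lambda>x. L x b)" unfolding L_def b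
      by (intro continuous_on_add continuous_on_const continuous_on_sum continuous_on_scaleR
          continuous_on_diff contpart) auto
    then show "continuous_on U (\<lambda>x. blinfun_apply (f' x) b)"
      by (rule continuous_on_eq) (simp add: f'app)
  qed
  have f'p: "f' p = id_blinfun"
    by (rule blinfun_eqI) (simp add: f'app[OF U(2)] L_def)
  obtain U' V g g' where IFT: "open U'" "U' \<subseteq> U" "p \<in> U'" "open V" "\<Phi> p \<in> V"
      "homeomorphism U' V \<Phi> g"
      "\<And>y. y \<in> V \<Longrightarrow> (g has_derivative (g' y)) (at y)"
      "\<And>y. y \<in> V \<Longrightarrow> g' y = inv (blinfun_apply (f'(g y)))"
    by (rule inverse_function_theorem[OF U(1) der\<Phi> contf' U(2), of id_blinfun]) (auto simp: f'p intro!: blinfun_eqI)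
  have Fp: "F i p = 0" if "i < k" for i using SU pS U(2) that by blast
  have \<Phi>p: "\<Phi> p = 0" unfolding \<Phi>_def using Fp lin[OF _ U(2)] by (simp add: linear_0)
  obtain e where e: "e > 0" "ball 0 e \<subseteq> V" using IFT(4,5) \<Phi>p open_contains_ball by metis
  have hom: "\<forall>x\<in>U'. g (\<Phi> x) = x" "\<forall>y\<in>V. \<Phi> (g y) = y" "g ` V = U'"
    using IFT(6) unfolding homeomorphism_def by auto
  have key: "DF j p (\<Phi> x) = F j x" if "j < k" for j x
  proof -
    have "DF j p (\<Phi> x) = DF j p (x - p) + (\<Sum>i<k. (F i x - DF i p (x - p)) * DF j p (w i))"
      unfolding \<Phi>_def using lin[OF that U(2)] by (simp add: linear_add linear_sum linear_scale)
    also have "\<dots> = DF j p (x - p) + (\<Sum>i<k. if i = j then F i x - DF i p (x - p) else 0)"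
      using w[OF that] by (intro arg_cong2[where f="(+)"] sum.cong) auto
    also have "\<dots> = F j x" using that by simp
    finally show ?thesis .
  qed
  define e' where "e' = e / (norm v + 1)"
  have e'pos: "e' > 0" unfolding e'_def using e(1) by (intro divide_pos_pos) (auto intro: add_nonneg_pos)
  have inV: "t *\<^sub>R v \<in> V" if "\<bar>t\<bar> < e'" for t
  proof -
    have "\<bar>t\<bar> * norm v \<le> \<bar>t\<bar> * (norm v + 1)" by (simp add: mult_left_mono)
    also have "\<dots> < e' * (norm v + 1)" using that by (intro mult_strict_right_mono) (auto intro: add_nonneg_pos)
    also have "\<dots> = e" unfolding e'_def
      by (metis add_nonneg_pos nonzero_eq_divide_eq norm_ge_zero order_less_irrefl zero_less_one)
    finally show ?thesis using e(2) by (auto simp: dist_norm)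
  qed
  define \<gamma> where "\<gamma> t = g (t *\<^sub>R v)" for t
  have g0: "\<gamma> 0 = p" unfolding \<gamma>_def using hom(1) IFT(3) \<Phi>p by force
  have gS: "\<gamma> t \<in> S" if "\<bar>t\<bar> < e'" for t
  proof -
    have gU: "\<gamma> t \<in> U" unfolding \<gamma>_def using hom(3) inV[OF that] IFT(2) by blast
    have "F j (\<gamma> t) = 0" if "j < k" for j
    proof -
      have "F j (\<gamma> t) = DF j p (t *\<^sub>R v)"
        using key[OF that, of "\<gamma> t"] hom(2) inV[OF \<open>\<bar>t\<bar> < e'\<close>] unfolding \<gamma>_def by simp
      also have "\<dots> = 0" using lin[OF that U(2)] v that unfolding DF_def by (simp add: linear_scale)
      finally show ?thesis .
    qed
    then show ?thesis using gU SU by blast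
  qed
  have "0 \<in> V" using e by auto
  have g'0: "g' 0 = id" using IFT(8)[OF \<open>0 \<in> V\<close>] hom(2) \<Phi>p g0 f'p
    unfolding \<gamma>_def by (simp add: id_def[symmetric])
  have "(\<gamma> has_derivative (g' 0 \<circ> (\<lambda>t. t *\<^sub>R v))) (at 0)"
    unfolding \<gamma>_def
    using diff_chain_at[of "\<lambda>t. t *\<^sub>R v" "\<lambda>t. t *\<^sub>R v" 0 g "g' 0"]
      IFT(7)[OF \<open>0 \<in> V\<close>] bounded_linear_imp_has_derivative[OF bounded_linear_scaleR_left]
    by (simp add: comp_def, blast)
  then have "(\<gamma> has_vector_derivative v) (at 0)"
    unfolding has_vector_derivative_def g'0 by (simp add: comp_def)
  then show ?thesis unfolding tangent_space_def using e'pos g0 gS by blast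
qed



lemma tangent_subspace:
  fixes S :: "(real^'n::finite) set"
  assumes "submanifold S" "p \<in> S"
  shows "subspace (tangent_space S p)"
proof -
  obtain U k and F :: "nat \<Rightarrow> real^'n \<Rightarrow> real" where U: "open U" "p \<in> U" and sm: "\<forall>i<k. smooth_on U (F i)"
    and surjx: "\<forall>x\<in>S \<inter> U. \<forall>c :: nat \<Rightarrow> real. \<exists>v. \<forall>i<k. frechet_derivative (F i) (at x) v = c i"
    and SU: "S \<inter> U = {x\<in>U. \<forall>i<k. F i x = 0}"
    using assms(1)[unfolded submanifold_def, rule_format, OF assms(2)] by blast
  have surj: "\<forall>c :: nat \<Rightarrow> real. \<exists>v. \<forall>i<k. frechet_derivative (F i) (at p) v = c i"
    using surjx assms(2) U(2) by blast
  have lin: "linear (frechet_derivative (F i) (at p))" if "i < k" for i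
    using has_derivative_linear frechet_derivative_works smooth_diff sm that U(2) by blast
  have eq: "tangent_space S p = {v. \<forall>i<k. frechet_derivative (F i) (at p) v = 0}"
  proof (intro equalityI subsetI CollectI allI impI)
    fix v i assume v: "v \<in> tangent_space S p" and i: "i < k"
    show "frechet_derivative (F i) (at p) v = 0"
      by (rule tangent_sub_kernel[OF U _ _ v]) (use SU i smooth_diff[of U "F i" p] sm U(2) in auto)
  next
    fix v assume "v \<in> {v. \<forall>i<k. frechet_derivative (F i) (at p) v = 0}"
    then show "v \<in> tangent_space S p"
      using kernel_sub_tangent[OF U sm surj SU assms(2)] by blast
  qed
  show ?thesis unfolding eq subspace_def
    using lin by (auto simp: linear_0 linear_add linear_scale)
qed

lemma fisher_sym: "fisher p X Y = fisher p Y X"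
  unfolding fisher_def by (simp add: mult.commute)

lemma fisher_diff_left: "fisher p (X - Z) Y = fisher p X Y - fisher p Z Y"
  unfolding fisher_def by (simp add: sum_subtractf[symmetric] diff_divide_distrib left_diff_distrib)

lemma fisher_zero:
  assumes "\<forall>w. 0 < p$w" "fisher p X X = 0" shows "X = 0"
proof -
  have nn: "0 \<le> X$w * X$w / p$w" for w using assms(1)[rule_format, of w] by simp
  have "X$w * X$w / p$w = 0" for w
    using assms(2) unfolding fisher_def by (rule sum_nonneg_0[rotated 2]) (auto intro: nn)
  then show ?thesis using assms(1) by (simp add: vec_eq_iff) (metis less_irrefl)
qed

lemma riesz_unique:
  assumes "subspace T" "\<forall>w. 0 < p$w" "v1 \<in> T" "v2 \<in> T"
    "\<forall>X\<in>T. fisher p v1 X = \<alpha> X" "\<forall>X\<in>T. fisher p v2 X = \<alpha> X"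
  shows "v1 = v2"
proof -
  have d: "v1 - v2 \<in> T" using assms by (simp add: subspace_diff)
  have "fisher p (v1 - v2) (v1 - v2) = 0"
    using assms d by (simp add: fisher_diff_left)
  then have "v1 - v2 = 0" by (rule fisher_zero[OF assms(2)])
  then show ?thesis by simp
qed

lemma lin_sum_on:
  assumes "subspace T" "finite A" "A \<subseteq> T"
    and add: "\<forall>X\<in>T. \<forall>Y\<in>T. \<beta> (X + Y) = \<beta> X + \<beta> Y"
    and sc: "\<forall>c. \<forall>X\<in>T. \<beta> (c *\<^sub>R X) = c * \<beta> X"
  shows "\<beta> (\<Sum>a\<in>A. c a *\<^sub>R a) = (\<Sum>a\<in>A. c a * \<beta> a)"
  using assms(2,3)
proof (induction A rule: finite_induct)
  case empty
  have "\<beta> 0 = 0" using sc assms(1) subspace_0[OF assms(1)] by (metis mult_zero_left scaleR_zero_left)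
  then show ?case by simp
next
  case (insert x F)
  have "(\<Sum>a\<in>F. c a *\<^sub>R a) \<in> T" using insert assms(1)
    by (intro subspace_sum subspace_scale) auto
  then show ?case using insert add sc assms(1) by (simp add: subspace_scale)
qed

lemma riesz_std:
  fixes T :: "(real^'n::finite) set"
  assumes "subspace T"
    and add: "\<forall>X\<in>T. \<forall>Y\<in>T. \<beta> (X + Y) = \<beta> X + \<beta> Y"
    and sc: "\<forall>c. \<forall>X\<in>T. \<beta> (c *\<^sub>R X) = c * \<beta> X"
  shows "\<exists>u\<in>T. \<forall>y\<in>T. u \<bullet> y = \<beta> y"
proof -
  obtain B where B: "B \<subseteq> T" "pairwise orthogonal B" "\<And>x. x \<in> B \<Longrightarrow> norm x = 1"
    "independent B" "span B = T"
    using orthonormal_basis_subspace[OF assms(1)] by metis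
  have fB: "finite B" using B(4) independent_imp_finite by blast
  define u where "u = (\<Sum>b\<in>B. \<beta> b *\<^sub>R b)"
  have uT: "u \<in> T" unfolding u_def using B(1) assms(1)
    by (intro subspace_sum subspace_scale) auto
  have "u \<bullet> y = \<beta> y" if y: "y \<in> T" for y
  proof -
    have "y = (\<Sum>b\<in>B. (y \<bullet> b) *\<^sub>R b)"
      using orthonormal_basis_expand[OF B(2) B(3) _ fB] y B(5) by simp
    then have "\<beta> y = (\<Sum>b\<in>B. (y \<bullet> b) * \<beta> b)"
      using lin_sum_on[OF assms(1) fB B(1) add sc, of "\<lambda>b. y \<bullet> b"] by simp
    also have "\<dots> = u \<bullet> y" unfolding u_def by (simp add: inner_sum_right inner_commute, rule sum.cong, auto)
    finally show ?thesis by simp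
  qed
  then show ?thesis using uT by blast
qed

lemma riesz_ex:
  fixes T :: "(real^'n::finite) set"
  assumes "subspace T" and pp: "\<forall>w. 0 < p$w" and a: "\<alpha> \<in> cotangent T"
  shows "\<exists>v\<in>T. \<forall>X\<in>T. fisher p v X = \<alpha> X"
proof -
  define D :: "real^'n \<Rightarrow> real^'n" where "D x = (\<chi> w. x$w / sqrt (p$w))" for x
  define Di :: "real^'n \<Rightarrow> real^'n" where "Di x = (\<chi> w. x$w * sqrt (p$w))" for x
  have sp: "sqrt (p$w) > 0" for w using pp by simp
  have DiD: "Di (D x) = x" for x using sp unfolding D_def Di_def by (simp add: vec_eq_iff less_imp_neq[symmetric])
  have DDi: "D (Di x) = x" for x using sp unfolding D_def Di_def by (simp add: vec_eq_iff less_imp_neq[symmetric])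
  have linD: "linear D" unfolding D_def by (rule linearI) (simp_all add: vec_eq_iff add_divide_distrib)
  have linDi: "linear Di" unfolding Di_def by (rule linearI) (simp_all add: vec_eq_iff algebra_simps)
  have fD: "fisher p X Y = D X \<bullet> D Y" for X Y
    unfolding fisher_def D_def inner_vec_def
  proof (intro sum.cong refl)
    fix w
    have "sqrt (p$w) * sqrt (p$w) = p$w" using pp by (simp add: less_imp_le)
    then show "X $ w * Y $ w / p $ w = (\<chi> w. X $ w / sqrt (p $ w)) $ w \<bullet> (\<chi> w. Y $ w / sqrt (p $ w)) $ w"
      by simp
  qed
  have subT': "subspace (D ` T)" using linear_subspace_image[OF linD assms(1)] .
  have DiT: "Di y \<in> T" if "y \<in> D ` T" for y using that DiD by auto
  have add: "\<forall>X\<in>T. \<forall>Y\<in>T. \<alpha> (X + Y) = \<alpha> X + \<alpha> Y"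
    and sc: "\<forall>c. \<forall>X\<in>T. \<alpha> (c *\<^sub>R X) = c * \<alpha> X" using a unfolding cotangent_def by auto
  obtain u where u: "u \<in> D ` T" "\<forall>y\<in>D ` T. u \<bullet> y = \<alpha> (Di y)"
    using riesz_std[OF subT', of "\<lambda>y. \<alpha> (Di y)"] add sc DiT
    by (auto simp: linear_add[OF linDi] linear_scale[OF linDi])
  show ?thesis
  proof (intro bexI ballI)
    show "Di u \<in> T" using DiT u(1) .
    fix X assume "X \<in> T"
    then show "fisher p (Di u) X = \<alpha> X" using u(2) fD DDi DiD by auto
  qed
qed

lemma riesz_prop:
  assumes "subspace T" "\<forall>w. 0 < p$w" "\<alpha> \<in> cotangent T"
  shows "riesz p T \<alpha> \<in> T \<and> (\<forall>X\<in>T. fisher p (riesz p T \<alpha>) X = \<alpha> X)"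
proof -
  obtain v where v: "v \<in> T" "\<forall>X\<in>T. fisher p v X = \<alpha> X" using riesz_ex[OF assms] by blast
  have "riesz p T \<alpha> = v" unfolding riesz_def
  proof (rule the_equality)
    show "v \<in> T \<and> (\<forall>X\<in>T. fisher p v X = \<alpha> X)" using v by simp
    fix x assume "x \<in> T \<and> (\<forall>X\<in>T. fisher p x X = \<alpha> X)"
    then show "x = v" using riesz_unique[OF assms(1,2), of x v \<alpha>] v by blast
  qed
  then show ?thesis using v by simp
qed

lemma riesz_eq:
  assumes "subspace T" "\<forall>w. 0 < p$w" "v \<in> T" "\<forall>X\<in>T. fisher p v X = \<alpha> X"
  shows "riesz p T \<alpha> = v"
  unfolding riesz_def
proof (rule the_equality)
  show "v \<in> T \<and> (\<forall>X\<in>T. fisher p v X = \<alpha> X)" using assms by simp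
  fix x assume "x \<in> T \<and> (\<forall>X\<in>T. fisher p x X = \<alpha> X)"
  then show "x = v" using riesz_unique[OF assms(1,2), of x v \<alpha>] assms by blast
qed



theorem mainTheorem11:
  fixes M :: "(real^'a::finite) set" and N :: "(real^'b::finite) set"
    and W :: "'b \<Rightarrow> 'a \<Rightarrow> real" and V :: "'a \<Rightarrow> 'b \<Rightarrow> real"
    and p :: "real^'a" and q :: "real^'b"
  assumes "M \<subseteq> prob_simplex" and "submanifold M"
    and "N \<subseteq> prob_simplex" and "submanifold N"
    and "is_channel W" and "\<forall>x\<in>M. markov_map W x \<in> N"
    and "is_channel V" and "\<forall>y\<in>N. markov_map V y \<in> M"
    and "\<forall>x\<in>M. markov_map V (markov_map W x) = x"
    and "p \<in> M" and "q \<in> N" and "q = markov_map W p" and "p = markov_map V q"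
  shows "(\<forall>X\<in>tangent_space M p. \<forall>Y\<in>tangent_space N q.
            fisher p X (markov_map V Y) = fisher q (markov_map W X) Y)
       \<and> (\<forall>\<alpha>\<in>cotangent (tangent_space M p). \<forall>\<beta>\<in>cotangent (tangent_space N q).
            fisher_co p (tangent_space M p) \<alpha> (pullback (markov_map W) (tangent_space M p) \<beta>)
          = fisher_co q (tangent_space N q) (pullback (markov_map V) (tangent_space N q) \<alpha>) \<beta>)
       \<and> (\<forall>Y\<in>tangent_space N q.
            markov_map W (markov_map V Y) \<in> markov_map W ` tangent_space M p
          \<and> (\<forall>Z\<in>markov_map W ` tangent_space M p.
               fisher q (Y - markov_map W (markov_map V Y)) Z = 0))"
proof -
  define TM where "TM = tangent_space M p"
  define TN where "TN = tangent_space N q"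
  have pp: "\<forall>w. 0 < p$w" using assms(1,10) unfolding prob_simplex_def by blast
  have qp: "\<forall>w. 0 < q$w" using assms(3,11) unfolding prob_simplex_def by blast
  have subM: "subspace TM" unfolding TM_def by (rule tangent_subspace[OF assms(2,10)])
  have subN: "subspace TN" unfolding TN_def by (rule tangent_subspace[OF assms(4,11)])
  have VWX: "markov_map V (markov_map W X) = X" if "X \<in> TM" for X
    using tangent_id[OF that[unfolded TM_def] assms(9)] .
  have adj: "fisher p X (markov_map V Y) = fisher q (markov_map W X) Y" if "X \<in> TM" for X Y
    using fisher_adj[OF pp qp assms(5,7,12,13) VWX[OF that]] by simp
  have WT: "markov_map W X \<in> TN" if "X \<in> TM" for X
    using tangent_map[OF that[unfolded TM_def] assms(6)] assms(12) unfolding TN_def by simp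
  have VT: "markov_map V Y \<in> TM" if "Y \<in> TN" for Y
    using tangent_map[OF that[unfolded TN_def] assms(8)] assms(13) unfolding TM_def by simp
  have P1: "\<forall>X\<in>TM. \<forall>Y\<in>TN. fisher p X (markov_map V Y) = fisher q (markov_map W X) Y"
    using adj by blast
  have P2: "\<forall>\<alpha>\<in>cotangent TM. \<forall>\<beta>\<in>cotangent TN.
      fisher_co p TM \<alpha> (pullback (markov_map W) TM \<beta>)
    = fisher_co q TN (pullback (markov_map V) TN \<alpha>) \<beta>"
  proof (intro ballI)
    fix \<alpha> \<beta> assume a: "\<alpha> \<in> cotangent TM" and b: "\<beta> \<in> cotangent TN"
    define ra where "ra = riesz p TM \<alpha>"
    define rb where "rb = riesz q TN \<beta>"
    have ra: "ra \<in> TM" "\<forall>X\<in>TM. fisher p ra X = \<alpha> X"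
      using riesz_prop[OF subM pp a] unfolding ra_def by auto
    have rb: "rb \<in> TN" "\<forall>Y\<in>TN. fisher q rb Y = \<beta> Y"
      using riesz_prop[OF subN qp b] unfolding rb_def by auto
    have u: "riesz p TM (pullback (markov_map W) TM \<beta>) = markov_map V rb"
    proof (rule riesz_eq[OF subM pp VT[OF rb(1)]], intro ballI)
      fix X assume X: "X \<in> TM"
      have "fisher p (markov_map V rb) X = fisher p X (markov_map V rb)" by (rule fisher_sym)
      also have "\<dots> = fisher q (markov_map W X) rb" by (rule adj[OF X])
      also have "\<dots> = fisher q rb (markov_map W X)" by (rule fisher_sym)
      also have "\<dots> = \<beta> (markov_map W X)" using rb(2) WT[OF X] by blast
      finally show "fisher p (markov_map V rb) X = pullback (markov_map W) TM \<beta> X"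
        using X unfolding pullback_def by simp
    qed
    have w: "riesz q TN (pullback (markov_map V) TN \<alpha>) = markov_map W ra"
    proof (rule riesz_eq[OF subN qp WT[OF ra(1)]], intro ballI)
      fix Y assume Y: "Y \<in> TN"
      have "fisher q (markov_map W ra) Y = fisher p ra (markov_map V Y)" using adj[OF ra(1)] by simp
      also have "\<dots> = \<alpha> (markov_map V Y)" using ra(2) VT[OF Y] by blast
      finally show "fisher q (markov_map W ra) Y = pullback (markov_map V) TN \<alpha> Y"
        using Y unfolding pullback_def by simp
    qed
    show "fisher_co p TM \<alpha> (pullback (markov_map W) TM \<beta>)
      = fisher_co q TN (pullback (markov_map V) TN \<alpha>) \<beta>"
      unfolding fisher_co_def u w ra_def[symmetric] rb_def[symmetric] using adj[OF ra(1)] by simp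
  qed
  have P3: "\<forall>Y\<in>TN. markov_map W (markov_map V Y) \<in> markov_map W ` TM
      \<and> (\<forall>Z\<in>markov_map W ` TM. fisher q (Y - markov_map W (markov_map V Y)) Z = 0)"
  proof (intro ballI conjI)
    fix Y assume Y: "Y \<in> TN"
    show "markov_map W (markov_map V Y) \<in> markov_map W ` TM" using VT[OF Y] by blast
    fix Z assume "Z \<in> markov_map W ` TM"
    then obtain X' where X': "X' \<in> TM" "Z = markov_map W X'" by blast
    have "fisher q (Y - markov_map W (markov_map V Y)) Z
        = fisher q (markov_map W X') Y - fisher q (markov_map W X') (markov_map W (markov_map V Y))"
      unfolding fisher_diff_left X'(2) by (simp add: fisher_sym)
    also have "\<dots> = fisher p X' (markov_map V Y) - fisher p X' (markov_map V (markov_map W (markov_map V Y)))"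
      using adj[OF X'(1)] by simp
    also have "\<dots> = 0" using VWX[OF VT[OF Y]] by simp
    finally show "fisher q (Y - markov_map W (markov_map V Y)) Z = 0" .
  qed
  show ?thesis using P1 P2 P3 unfolding TM_def TN_def by blast
qed

end
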